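(* Let $G=G_1+\dots+G_n$ be a disjunctive sum of dicotic nonzugzwang scoring games, each with all terminal positions numbers. Let $m_i=m(G_i)$ and $\sigma=\max_{1\leq i\leq n}\sigma(G_i)$. Then $$\sum_{i=1}^n m_i-\sigma\leq Rs(G)\leq \sum_{i=1}^n m_i\leq Ls(G)\leq\sum_{i=1}^n m_i+\sigma.$$
   Context: A scoring game is $G=\langle G^L\mid G^R\rangle$ with $G^L,G^R$ finite nonempty sets of scoring games or empty sets decorated with a real, $\emptyset^s$; $\langle\emptyset^s\mid\emptyset^s\rangle$ is the number $s$. $Ls(\langle\emptyset^s\mid G^R\rangle)=s$, $Rs(\langle G^L\mid\emptyset^s\rangle)=s$, otherwise $Ls(G)=\max_{G^l\in G^L}Rs(G^l)$, $Rs(G)=\min_{G^r\in G^R}Ls(G^r)$. Disjunctive sum: Left options of $G_1+G_2$ are all $G_1^l+G_2$, $G_1+G_2^l$ (Left side $\emptyset^{\ell_1+\ell_2}$ if neither has Left options), symmetrically for Right; $H+c$ adds the number $c$ to all terminal scores; $nG$ is the sum of $n$ copies. Dicotic: at every position both players have options or neither; nonzugzwang: $Ls(H)\ge Rs(H)$ at every position. Mean: $m(G)=\lim_{n\to\infty}Ls(nG)/n=\lim_{n\to\infty}Rs(nG)/n$ (exists for dicotic nonzugzwang games). Cooling: if $G$ is a number $k$, $G_t=k$, $\sigma(G)=0$; otherwise $\widetilde G_t=\langle \{G^l_t-t\}\mid \{G^r_t+t\}\rangle$, $t_0=\min\{t\ge0: Ls(\widetilde G_t)=Rs(\widetilde G_t)\}$,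 $G_t=\widetilde G_t$ for $t\le t_0$ and the number $Ls(\widetilde G_{t_0})$ for $t>t_0$; $\sigma(G)=t_0$ is the temperature. *)

theory Defs
  imports Complex_Main
begin

text \<open>If L is empty, the Left side is the decorated empty set with decoration l
(otherwise the real l is irrelevant); similarly for R and r.\<close>

datatype sgame = SG (lopts: "sgame list") (lterm: real) (ropts: "sgame list") (rterm: real)

definition num :: "real \<Rightarrow> sgame" where
  "num s = SG [] s [] s"

definition is_num :: "sgame \<Rightarrow> bool" where
  "is_num G \<longleftrightarrow> lopts G = [] \<and> ropts G = [] \<and> lterm G = rterm G"

fun LRs :: "sgame \<Rightarrow> real \<times> real" where
  "LRs (SG L l R r) =
     ((if L = [] then l else Max (set (map (\<lambda>g. snd (LRs g)) L))),
      (if R = [] then r else Min (set (map (\<lambda>g. fst (LRs g)) R))))"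

definition Ls :: "sgame \<Rightarrow> real" where "Ls G = fst (LRs G)"
definition Rs :: "sgame \<Rightarrow> real" where "Rs G = snd (LRs G)"

fun shift :: "real \<Rightarrow> sgame \<Rightarrow> sgame" where
  "shift c (SG L l R r) = SG (map (shift c) L) (l + c) (map (shift c) R) (r + c)"

function gplus :: "sgame \<Rightarrow> sgame \<Rightarrow> sgame" where
  "gplus (SG L1 l1 R1 r1) (SG L2 l2 R2 r2) =
     SG (map (\<lambda>x. gplus x (SG L2 l2 R2 r2)) L1 @ map (\<lambda>y. gplus (SG L1 l1 R1 r1) y) L2)
        (l1 + l2)
        (map (\<lambda>x. gplus x (SG L2 l2 R2 r2)) R1 @ map (\<lambda>y. gplus (SG L1 l1 R1 r1) y) R2)
        (r1 + r2)"
  by pat_completeness auto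
termination
  by (relation "measure (\<lambda>(a, b). size a + size b)")
     (auto dest!: size_list_estimation'[OF _ le_refl, where f = size] simp: less_Suc_eq_le)

fun gsum :: "sgame list \<Rightarrow> sgame" where
  "gsum [] = num 0"
| "gsum [g] = g"
| "gsum (g # gs) = gplus g (gsum gs)"

fun ncopies :: "nat \<Rightarrow> sgame \<Rightarrow> sgame" where
  "ncopies 0 G = num 0"
| "ncopies (Suc 0) G = G"
| "ncopies (Suc n) G = gplus G (ncopies n G)"

fun positions :: "sgame \<Rightarrow> sgame set" where
  "positions (SG L l R r) =
     insert (SG L l R r) ((\<Union>g\<in>set L. positions g) \<union> (\<Union>g\<in>set R. positions g))"

definition dicotic :: "sgame \<Rightarrow> bool" where
  "dicotic G \<longleftrightarrow> (\<forall>H\<in>positions G. (lopts H = []) \<longleftrightarrow> (ropts H = []))"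

definition nonzugzwang :: "sgame \<Rightarrow> bool" where
  "nonzugzwang G \<longleftrightarrow> (\<forall>H\<in>positions G. Ls H \<ge> Rs H)"

definition terminal_numbers :: "sgame \<Rightarrow> bool" where
  "terminal_numbers G \<longleftrightarrow>
     (\<forall>H\<in>positions G. lopts H = [] \<and> ropts H = [] \<longrightarrow> is_num H)"

definition mean :: "sgame \<Rightarrow> real" where
  "mean G = lim (\<lambda>n. Ls (ncopies n G) / real n)"

fun cool :: "sgame \<Rightarrow> real \<Rightarrow> sgame" where
  "cool (SG L l R r) =
     (if L = [] \<and> R = [] \<and> l = r then (\<lambda>t. num l)
      else (\<lambda>t. let tl = (\<lambda>s. SG (map (\<lambda>g. shift (- s) (cool g s)) L) l
                                  (map (\<lambda>g. shift s (cool g s)) R) r);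
                    t0 = (LEAST s. 0 \<le> s \<and> Ls (tl s) = Rs (tl s))
                in if t \<le> t0 then tl t else num (Ls (tl t0))))"

definition cool_tilde :: "sgame \<Rightarrow> real \<Rightarrow> sgame" where
  "cool_tilde G s = SG (map (\<lambda>g. shift (- s) (cool g s)) (lopts G)) (lterm G)
                       (map (\<lambda>g. shift s (cool g s)) (ropts G)) (rterm G)"

definition temp :: "sgame \<Rightarrow> real" where
  "temp G = (if is_num G then 0
             else (LEAST s. 0 \<le> s \<and> Ls (cool_tilde G s) = Rs (cool_tilde G s)))"

end

theory Submission
  imports Defs "HOL-Analysis.Lipschitz"
begin

lemma Ls_eq: "Ls G = (if lopts G = [] then lterm G else Max (Rs ` set (lopts G)))"
  by (cases G) (simp add: Ls_def Rs_def image_image)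

lemma Rs_eq: "Rs G = (if ropts G = [] then rterm G else Min (Ls ` set (ropts G)))"
  by (cases G) (simp add: Ls_def Rs_def image_image)

lemma Ls_ge: "x \<in> set (lopts G) \<Longrightarrow> Rs x \<le> Ls G"
  by (auto simp: Ls_eq)

lemma Rs_le: "x \<in> set (ropts G) \<Longrightarrow> Rs G \<le> Ls x"
  by (auto simp: Rs_eq)

lemma Ls_le_iff: "lopts G \<noteq> [] \<Longrightarrow> Ls G \<le> c \<longleftrightarrow> (\<forall>x\<in>set (lopts G). Rs x \<le> c)"
  by (simp add: Ls_eq)

lemma Rs_ge_iff: "ropts G \<noteq> [] \<Longrightarrow> c \<le> Rs G \<longleftrightarrow> (\<forall>x\<in>set (ropts G). c \<le> Ls x)"
  by (simp add: Rs_eq)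

lemma Ls_ex: "lopts G \<noteq> [] \<Longrightarrow> \<exists>x\<in>set (lopts G). Ls G = Rs x"
proof -
  assume "lopts G \<noteq> []"
  then have "Max (Rs ` set (lopts G)) \<in> Rs ` set (lopts G)" by (intro Max_in) auto
  then obtain x where "x \<in> set (lopts G)" "Max (Rs ` set (lopts G)) = Rs x" by blast
  then show ?thesis using \<open>lopts G \<noteq> []\<close> by (auto simp: Ls_eq)
qed

lemma Rs_ex: "ropts G \<noteq> [] \<Longrightarrow> \<exists>x\<in>set (ropts G). Rs G = Ls x"
proof -
  assume "ropts G \<noteq> []"
  then have "Min (Ls ` set (ropts G)) \<in> Ls ` set (ropts G)" by (intro Min_in) auto
  then obtain x where "x \<in> set (ropts G)" "Min (Ls ` set (ropts G)) = Ls x" by blast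
  then show ?thesis using \<open>ropts G \<noteq> []\<close> by (auto simp: Rs_eq)
qed

lemma size_lopts: "x \<in> set (lopts G) \<Longrightarrow> size x < size G"
  by (cases G) (auto dest!: size_list_estimation'[OF _ le_refl, where f = size] simp: less_Suc_eq_le)

lemma size_ropts: "x \<in> set (ropts G) \<Longrightarrow> size x < size G"
  by (cases G) (auto dest!: size_list_estimation'[OF _ le_refl, where f = size] simp: less_Suc_eq_le)

section \<open>Shift\<close>

lemma shift_sel[simp]: "lopts (shift c G) = map (shift c) (lopts G)"
  "ropts (shift c G) = map (shift c) (ropts G)"
  "lterm (shift c G) = lterm G + c" "rterm (shift c G) = rterm G + c"
  by (cases G; simp)+

lemma LRs_shift: "Ls (shift c G) = Ls G + c \<and> Rs (shift c G) = Rs G + c"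
proof (induction G)
  case (SG L l R r)
  have A: "Max ((\<lambda>x. Rs x + c) ` set L) = Max (Rs ` set L) + c" if "L \<noteq> []"
    using that by (intro Max_add_commute) auto
  have B: "Min ((\<lambda>x. Ls x + c) ` set R) = Min (Ls ` set R) + c" if "R \<noteq> []"
    using that by (intro Min_add_commute) auto
  have "Rs ` shift c ` set L = (\<lambda>x. Rs x + c) ` set L" using SG by (auto simp: image_image)
  moreover have "Ls ` shift c ` set R = (\<lambda>x. Ls x + c) ` set R" using SG by (auto simp: image_image)
  ultimately show ?case using A B
    by (simp add: Ls_eq[of "shift c _"] Rs_eq[of "shift c _"] Ls_eq[of "SG L l R r"] Rs_eq[of "SG L l R r"] del: shift.simps)
qed

lemma Ls_shift[simp]: "Ls (shift c G) = Ls G + c" and Rs_shift[simp]: "Rs (shift c G) = Rs G + c"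
  using LRs_shift by auto

lemma shift_0[simp]: "shift 0 G = G"
  by (induction G) (auto intro: map_idI)

lemma is_num_num[simp]: "is_num (num v)" by (simp add: is_num_def num_def)
lemma num_sel[simp]: "lopts (num v) = []" "ropts (num v) = []" "lterm (num v) = v" "rterm (num v) = v"
  by (simp_all add: num_def)
lemma LRs_num[simp]: "Ls (num v) = v" "Rs (num v) = v"
  by (simp_all add: Ls_eq Rs_eq)

lemma is_num_eq: "is_num G \<Longrightarrow> G = num (lterm G)"
  by (cases G) (auto simp: is_num_def num_def)

section \<open>Sums\<close>

lemma gplus_sel[simp]:
  "lopts (gplus a b) = map (\<lambda>x. gplus x b) (lopts a) @ map (gplus a) (lopts b)"
  "ropts (gplus a b) = map (\<lambda>x. gplus x b) (ropts a) @ map (gplus a) (ropts b)"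
  "lterm (gplus a b) = lterm a + lterm b"
  "rterm (gplus a b) = rterm a + rterm b"
  by (cases a; cases b; simp)+

lemma gplus_shift1: "gplus (shift c a) b = shift c (gplus a b)"
proof (induction a b rule: gplus.induct)
  case (1 L1 l1 R1 r1 L2 l2 R2 r2)
  show ?case using 1 by (simp add: algebra_simps)
qed

lemma gplus_shift2: "gplus a (shift c b) = shift c (gplus a b)"
proof (induction a b rule: gplus.induct)
  case (1 L1 l1 R1 r1 L2 l2 R2 r2)
  show ?case using 1 by (simp add: algebra_simps)
qed

lemma gplus_num2: "gplus b (num v) = shift v b"
proof (induction b)
  case (SG L l R r)
  then show ?case by (simp add: num_def)
qed

lemma gplus_num1: "gplus (num v) b = shift v b"
proof (induction b)
  case (SG L l R r)
  then show ?case by (simp add: num_def algebra_simps)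
qed

lemma gsum_Cons: "gsum (a # r) = gplus a (gsum r)"
  by (cases r) (simp_all add: gplus_num2)

lemma lterm_gsum: "lterm (gsum xs) = sum_list (map lterm xs)"
  by (induction xs) (simp_all add: gsum_Cons)

lemma rterm_gsum: "rterm (gsum xs) = sum_list (map rterm xs)"
  by (induction xs) (simp_all add: gsum_Cons)

lemma lopts_gsum_Nil: "lopts (gsum xs) = [] \<longleftrightarrow> (\<forall>g\<in>set xs. lopts g = [])"
  by (induction xs) (simp_all add: gsum_Cons)

lemma ropts_gsum_Nil: "ropts (gsum xs) = [] \<longleftrightarrow> (\<forall>g\<in>set xs. ropts g = [])"
  by (induction xs) (simp_all add: gsum_Cons)

lemma lopts_gsum: "set (lopts (gsum xs)) =
   {gsum (xs[j:=x]) | j x. j < length xs \<and> x \<in> set (lopts (xs!j))}"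
proof (induction xs)
  case Nil
  then show ?case by simp
next
  case (Cons a r)
  show ?case
  proof (intro set_eqI iffI)
    fix z assume "z \<in> set (lopts (gsum (a # r)))"
    then consider x where "x \<in> set (lopts a)" "z = gplus x (gsum r)"
      | y where "y \<in> set (lopts (gsum r))" "z = gplus a y"
      by (auto simp: gsum_Cons)
    then show "z \<in> {gsum ((a # r)[j:=x]) | j x. j < length (a # r) \<and> x \<in> set (lopts ((a # r)!j))}"
    proof cases
      case (1 x)
      then show ?thesis by (auto simp: gsum_Cons intro!: exI[of _ 0])
    next
      case (2 y)
      then obtain j x where "j < length r" "x \<in> set (lopts (r!j))" "y = gsum (r[j:=x])"
        using Cons by auto
      then show ?thesis using 2 by (auto simp: gsum_Cons intro!: exI[of _ "Suc j"])
    qed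
  next
    fix z assume "z \<in> {gsum ((a # r)[j:=x]) | j x. j < length (a # r) \<and> x \<in> set (lopts ((a # r)!j))}"
    then obtain j x where j: "j < length (a # r)" "x \<in> set (lopts ((a # r)!j))" "z = gsum ((a # r)[j:=x])"
      by blast
    show "z \<in> set (lopts (gsum (a # r)))"
    proof (cases j)
      case 0
      then show ?thesis using j by (auto simp: gsum_Cons)
    next
      case (Suc k)
      then have "gsum (r[k:=x]) \<in> set (lopts (gsum r))" using Cons j by auto
      then show ?thesis using j Suc by (auto simp: gsum_Cons)
    qed
  qed
qed

lemma ropts_gsum: "set (ropts (gsum xs)) =
   {gsum (xs[j:=x]) | j x. j < length xs \<and> x \<in> set (ropts (xs!j))}"
proof (induction xs)
  case Nil
  then show ?case by simp
next
  case (Cons a r)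
  show ?case
  proof (intro set_eqI iffI)
    fix z assume "z \<in> set (ropts (gsum (a # r)))"
    then consider x where "x \<in> set (ropts a)" "z = gplus x (gsum r)"
      | y where "y \<in> set (ropts (gsum r))" "z = gplus a y"
      by (auto simp: gsum_Cons)
    then show "z \<in> {gsum ((a # r)[j:=x]) | j x. j < length (a # r) \<and> x \<in> set (ropts ((a # r)!j))}"
    proof cases
      case (1 x)
      then show ?thesis by (auto simp: gsum_Cons intro!: exI[of _ 0])
    next
      case (2 y)
      then obtain j x where "j < length r" "x \<in> set (ropts (r!j))" "y = gsum (r[j:=x])"
        using Cons by auto
      then show ?thesis using 2 by (auto simp: gsum_Cons intro!: exI[of _ "Suc j"])
    qed
  next
    fix z assume "z \<in> {gsum ((a # r)[j:=x]) | j x. j < length (a # r) \<and> x \<in> set (ropts ((a # r)!j))}"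
    then obtain j x where j: "j < length (a # r)" "x \<in> set (ropts ((a # r)!j))" "z = gsum ((a # r)[j:=x])"
      by blast
    show "z \<in> set (ropts (gsum (a # r)))"
    proof (cases j)
      case 0
      then show ?thesis using j by (auto simp: gsum_Cons)
    next
      case (Suc k)
      then have "gsum (r[k:=x]) \<in> set (ropts (gsum r))" using Cons j by auto
      then show ?thesis using j Suc by (auto simp: gsum_Cons)
    qed
  qed
qed

section \<open>Permutation invariance\<close>

definition msz :: "sgame list \<Rightarrow> nat" where "msz xs = sum_list (map size xs)"

lemma msz_update: "j < length xs \<Longrightarrow> msz (xs[j:=x]) + size (xs!j) = msz xs + size x"
proof (induction xs arbitrary: j)
  case Nil then show ?case by simp
next
  case (Cons a r)
  show ?case
  proof (cases j)
    case 0
    then show ?thesis by (simp add: msz_def)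
  next
    case (Suc i)
    then have "msz (r[i:=x]) + size (r!i) = msz r + size x" using Cons by simp
    then show ?thesis using Suc by (simp add: msz_def)
  qed
qed

lemma msz_lopts: "j < length xs \<Longrightarrow> x \<in> set (lopts (xs!j)) \<Longrightarrow> msz (xs[j:=x]) < msz xs"
  using msz_update[of j xs x] size_lopts[of x "xs!j"] by simp

lemma msz_ropts: "j < length xs \<Longrightarrow> x \<in> set (ropts (xs!j)) \<Longrightarrow> msz (xs[j:=x]) < msz xs"
  using msz_update[of j xs x] size_ropts[of x "xs!j"] by simp

lemma sum_list_mset: "mset xs = mset ys \<Longrightarrow> sum_list (map f xs) = sum_list (map (f::_\<Rightarrow>real) ys)"
  by (metis mset_map sum_mset_sum_list)

lemma mset_match: "mset xs = mset ys \<Longrightarrow> j < length xs \<Longrightarrow>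
   \<exists>k<length ys. ys!k = xs!j \<and> mset (xs[j:=x]) = mset (ys[k:=x])"
proof -
  assume m: "mset xs = mset ys" and j: "j < length xs"
  then have "xs!j \<in> set ys" by (metis nth_mem set_mset_mset)
  then obtain k where k: "k < length ys" "ys!k = xs!j" by (metis in_set_conv_nth)
  then show ?thesis using m j by (auto simp: mset_update intro!: exI[of _ k])
qed

lemma gsum_perm: "mset xs = mset ys \<Longrightarrow> Ls (gsum xs) = Ls (gsum ys) \<and> Rs (gsum xs) = Rs (gsum ys)"
proof (induction "msz xs" arbitrary: xs ys rule: less_induct)
  case less
  have ms: "mset ys = mset xs" using less.prems by simp
  have sx: "set xs = set ys" using mset_eq_setD[OF less.prems] .
  have A: "Rs ` set (lopts (gsum xs)) = Rs ` set (lopts (gsum ys))"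
  proof (intro set_eqI iffI)
    fix v assume "v \<in> Rs ` set (lopts (gsum xs))"
    then obtain z where "z \<in> set (lopts (gsum xs))" "v = Rs z" by blast
    then obtain j x where j: "j < length xs" "x \<in> set (lopts (xs!j))" "v = Rs (gsum (xs[j:=x]))"
      unfolding lopts_gsum by blast
    obtain k where k: "k < length ys" "ys!k = xs!j" "mset (xs[j:=x]) = mset (ys[k:=x])"
      using mset_match[OF less.prems j(1)] by blast
    have "Rs (gsum (xs[j:=x])) = Rs (gsum (ys[k:=x]))" using less.hyps[OF msz_lopts[OF j(1,2)] k(3)] by (rule conjunct2)
    with j(3) have "v = Rs (gsum (ys[k:=x]))" by (rule trans)
    moreover have "gsum (ys[k:=x]) \<in> set (lopts (gsum ys))" unfolding lopts_gsum
      using k(1) j(2) k(2) by (intro CollectI exI[of _ k] exI[of _ x]) simp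
    ultimately show "v \<in> Rs ` set (lopts (gsum ys))" by blast
  next
    fix v assume "v \<in> Rs ` set (lopts (gsum ys))"
    then obtain z where "z \<in> set (lopts (gsum ys))" "v = Rs z" by blast
    then obtain k x where k: "k < length ys" "x \<in> set (lopts (ys!k))" "v = Rs (gsum (ys[k:=x]))"
      unfolding lopts_gsum by blast
    obtain j where j: "j < length xs" "xs!j = ys!k" "mset (ys[k:=x]) = mset (xs[j:=x])"
      using mset_match[OF ms k(1)] by blast
    have "Rs (gsum (xs[j:=x])) = Rs (gsum (ys[k:=x]))"
      using less.hyps[OF msz_lopts[OF j(1)] j(3)[symmetric]] k(2) j(2) by (simp only: conjunct2)
    moreover have "gsum (xs[j:=x]) \<in> set (lopts (gsum xs))" unfolding lopts_gsum
      using j(1) k(2) j(2) by (intro CollectI exI[of _ j] exI[of _ x]) simp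
    ultimately show "v \<in> Rs ` set (lopts (gsum xs))" using k(3) by (metis image_eqI)
  qed
  have B: "Ls ` set (ropts (gsum xs)) = Ls ` set (ropts (gsum ys))"
  proof (intro set_eqI iffI)
    fix v assume "v \<in> Ls ` set (ropts (gsum xs))"
    then obtain z where "z \<in> set (ropts (gsum xs))" "v = Ls z" by blast
    then obtain j x where j: "j < length xs" "x \<in> set (ropts (xs!j))" "v = Ls (gsum (xs[j:=x]))"
      unfolding ropts_gsum by blast
    obtain k where k: "k < length ys" "ys!k = xs!j" "mset (xs[j:=x]) = mset (ys[k:=x])"
      using mset_match[OF less.prems j(1)] by blast
    have "Ls (gsum (xs[j:=x])) = Ls (gsum (ys[k:=x]))" using less.hyps[OF msz_ropts[OF j(1,2)] k(3)] by (rule conjunct1)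
    with j(3) have "v = Ls (gsum (ys[k:=x]))" by (rule trans)
    moreover have "gsum (ys[k:=x]) \<in> set (ropts (gsum ys))" unfolding ropts_gsum
      using k(1) j(2) k(2) by (intro CollectI exI[of _ k] exI[of _ x]) simp
    ultimately show "v \<in> Ls ` set (ropts (gsum ys))" by blast
  next
    fix v assume "v \<in> Ls ` set (ropts (gsum ys))"
    then obtain z where "z \<in> set (ropts (gsum ys))" "v = Ls z" by blast
    then obtain k x where k: "k < length ys" "x \<in> set (ropts (ys!k))" "v = Ls (gsum (ys[k:=x]))"
      unfolding ropts_gsum by blast
    obtain j where j: "j < length xs" "xs!j = ys!k" "mset (ys[k:=x]) = mset (xs[j:=x])"
      using mset_match[OF ms k(1)] by blast
    have "Ls (gsum (xs[j:=x])) = Ls (gsum (ys[k:=x]))"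
      using less.hyps[OF msz_ropts[OF j(1)] j(3)[symmetric]] k(2) j(2) by (simp only: conjunct1)
    moreover have "gsum (xs[j:=x]) \<in> set (ropts (gsum xs))" unfolding ropts_gsum
      using j(1) k(2) j(2) by (intro CollectI exI[of _ j] exI[of _ x]) simp
    ultimately show "v \<in> Ls ` set (ropts (gsum xs))" using k(3) by (metis image_eqI)
  qed
  have C: "lopts (gsum xs) = [] \<longleftrightarrow> lopts (gsum ys) = []" "ropts (gsum xs) = [] \<longleftrightarrow> ropts (gsum ys) = []"
    using sx by (simp_all add: lopts_gsum_Nil ropts_gsum_Nil)
  have D: "lterm (gsum xs) = lterm (gsum ys)" "rterm (gsum xs) = rterm (gsum ys)"
    unfolding lterm_gsum rterm_gsum using sum_list_mset[OF less.prems] by blast+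
  show ?case using A B C D by (simp add: Ls_eq[of "gsum xs"] Ls_eq[of "gsum ys"] Rs_eq[of "gsum xs"] Rs_eq[of "gsum ys"])
qed

definition rem :: "nat \<Rightarrow> 'a list \<Rightarrow> 'a list" where "rem j xs = take j xs @ drop (Suc j) xs"

lemma mset_rem: "j < length xs \<Longrightarrow> mset xs = mset (xs!j # rem j xs)"
proof -
  assume "j < length xs"
  then have "xs = take j xs @ xs ! j # drop (Suc j) xs" by (rule id_take_nth_drop)
  then have "mset xs = mset (take j xs @ xs ! j # drop (Suc j) xs)" by simp
  then show ?thesis by (simp add: rem_def)
qed

lemma rem_update[simp]: "j < length xs \<Longrightarrow> rem j (xs[j:=x]) = rem j xs"
  by (simp add: rem_def)

lemma gsum_split: "j < length xs \<Longrightarrow>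
   Ls (gsum xs) = Ls (gplus (xs!j) (gsum (rem j xs))) \<and> Rs (gsum xs) = Rs (gplus (xs!j) (gsum (rem j xs)))"
  using gsum_perm[OF mset_rem] by (simp add: gsum_Cons)

lemma gsum_split_upd: "j < length xs \<Longrightarrow>
   Ls (gsum (xs[j:=x])) = Ls (gplus x (gsum (rem j xs))) \<and> Rs (gsum (xs[j:=x])) = Rs (gplus x (gsum (rem j xs)))"
  using gsum_split[of j "xs[j:=x]"] by simp

lemma gsum_shift_upd: "j < length xs \<Longrightarrow>
   Ls (gsum (xs[j:=shift c x])) = Ls (gsum (xs[j:=x])) + c \<and> Rs (gsum (xs[j:=shift c x])) = Rs (gsum (xs[j:=x])) + c"
  using gsum_split_upd[of j xs "shift c x"] gsum_split_upd[of j xs x] by (simp add: gplus_shift1)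

section \<open>Good games\<close>

definition okp :: "sgame \<Rightarrow> bool" where
  "okp H \<longleftrightarrow> (lopts H = [] \<longleftrightarrow> ropts H = []) \<and> Rs H \<le> Ls H \<and> (lopts H = [] \<longrightarrow> lterm H = rterm H)"

definition good :: "sgame \<Rightarrow> bool" where "good G \<longleftrightarrow> (\<forall>H\<in>positions G. okp H)"

lemma positions_eq: "positions G = insert G ((\<Union>g\<in>set (lopts G). positions g) \<union> (\<Union>g\<in>set (ropts G). positions g))"
  by (cases G) simp

lemma good_iff: "good G \<longleftrightarrow> okp G \<and> (\<forall>x\<in>set (lopts G). good x) \<and> (\<forall>x\<in>set (ropts G). good x)"
  unfolding good_def by (subst positions_eq) auto

lemma good_okp: "good G \<Longrightarrow> okp G"
  using good_iff[of G] by blast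

lemma good_dic: "good G \<Longrightarrow> lopts G = [] \<longleftrightarrow> ropts G = []"
  using good_okp okp_def by blast

lemma good_nz: "good G \<Longrightarrow> Rs G \<le> Ls G"
  using good_okp okp_def by blast

lemma good_term: "good G \<Longrightarrow> lopts G = [] \<Longrightarrow> is_num G"
  using good_okp[of G] by (simp add: okp_def is_num_def)

lemma good_term': "good G \<Longrightarrow> ropts G = [] \<Longrightarrow> is_num G"
  using good_okp[of G] by (simp add: okp_def is_num_def)

lemma good_lopt: "good G \<Longrightarrow> x \<in> set (lopts G) \<Longrightarrow> good x"
  using good_iff[of G] by blast

lemma good_ropt: "good G \<Longrightarrow> x \<in> set (ropts G) \<Longrightarrow> good x"
  using good_iff[of G] by blast

lemma good_num[simp]: "good (num v)"
  using good_iff[of "num v"] by (simp add: okp_def)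

lemma good_shift: "good G \<Longrightarrow> good (shift c G)"
proof (induction G)
  case (SG L l R r)
  have "okp (shift c (SG L l R r))" using good_okp[OF SG.prems]
    by (simp add: okp_def del: shift.simps)
  moreover have "\<forall>x\<in>set (lopts (shift c (SG L l R r))). good x"
    using SG good_lopt[OF SG.prems] by (simp del: shift.simps)
  moreover have "\<forall>x\<in>set (ropts (shift c (SG L l R r))). good x"
    using SG good_ropt[OF SG.prems] by (simp del: shift.simps)
  ultimately show ?case using good_iff by blast
qed

lemma num_is: "is_num a \<Longrightarrow> Ls a = lterm a \<and> Rs a = lterm a"
  by (simp add: Ls_eq Rs_eq is_num_def)

lemma sum_ineqs:
  assumes "good a" "good b"
  shows "Ls (gplus a b) \<le> Ls a + Ls b \<and> Rs (gplus a b) \<le> Rs a + Ls b \<and> Rs (gplus a b) \<le> Ls a + Rs b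
    \<and> Rs a + Rs b \<le> Rs (gplus a b) \<and> Ls a + Rs b \<le> Ls (gplus a b) \<and> Rs a + Ls b \<le> Ls (gplus a b)"
  using assms
proof (induction "size a + size b" arbitrary: a b rule: less_induct)
  case less
  show ?case
  proof (cases "is_num a \<or> is_num b")
    case True
    then show ?thesis
    proof
      assume "is_num a"
      then have "gplus a b = shift (lterm a) b" by (metis is_num_eq gplus_num1)
      then show ?thesis using good_nz[OF less.prems(2)] num_is[OF \<open>is_num a\<close>] by auto
    next
      assume "is_num b"
      then have "gplus a b = shift (lterm b) a" by (metis is_num_eq gplus_num2)
      then show ?thesis using good_nz[OF less.prems(1)] num_is[OF \<open>is_num b\<close>] by auto
    qed
  next
    case False
    then have ne: "lopts a \<noteq> []" "ropts a \<noteq> []" "lopts b \<noteq> []" "ropts b \<noteq> []"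
      using good_term good_term' less.prems by blast+
    note IH = less.hyps
    have sz: "\<And>x. x \<in> set (lopts a) \<Longrightarrow> size x + size b < size a + size b"
      "\<And>x. x \<in> set (ropts a) \<Longrightarrow> size x + size b < size a + size b"
      "\<And>y. y \<in> set (lopts b) \<Longrightarrow> size a + size y < size a + size b"
      "\<And>y. y \<in> set (ropts b) \<Longrightarrow> size a + size y < size a + size b"
      using size_lopts size_ropts by fastforce+
    have g: "\<And>x. x \<in> set (lopts a) \<Longrightarrow> good x" "\<And>x. x \<in> set (ropts a) \<Longrightarrow> good x"
      "\<And>y. y \<in> set (lopts b) \<Longrightarrow> good y" "\<And>y. y \<in> set (ropts b) \<Longrightarrow> good y"
      using good_lopt good_ropt less.prems by blast+
    have ne2: "lopts (gplus a b) \<noteq> []" "ropts (gplus a b) \<noteq> []" using ne by auto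
    have 1: "Ls (gplus a b) \<le> Ls a + Ls b"
      unfolding Ls_le_iff[OF ne2(1)]
    proof
      fix z assume "z \<in> set (lopts (gplus a b))"
      then consider x where "x \<in> set (lopts a)" "z = gplus x b" | y where "y \<in> set (lopts b)" "z = gplus a y"
        by auto
      then show "Rs z \<le> Ls a + Ls b"
      proof cases
        case (1 x)
        then have "Rs z \<le> Rs x + Ls b" using IH[OF sz(1) g(1) less.prems(2)] by auto
        then show ?thesis using Ls_ge[OF 1(1)] by linarith
      next
        case (2 y)
        then have "Rs z \<le> Ls a + Rs y" using IH[OF sz(3) less.prems(1) g(3)] by auto
        then show ?thesis using Ls_ge[OF 2(1)] by linarith
      qed
    qed
    have 2: "Rs (gplus a b) \<le> Rs a + Ls b"
    proof -
      obtain x where x: "x \<in> set (ropts a)" "Rs a = Ls x" using Rs_ex[OF ne(2)] by blast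
      then have "gplus x b \<in> set (ropts (gplus a b))" by simp
      then have "Rs (gplus a b) \<le> Ls (gplus x b)" by (rule Rs_le)
      also have "\<dots> \<le> Ls x + Ls b" using IH[OF sz(2)[OF x(1)] g(2)[OF x(1)] less.prems(2)] by auto
      finally show ?thesis using x by simp
    qed
    have 3: "Rs (gplus a b) \<le> Ls a + Rs b"
    proof -
      obtain y where y: "y \<in> set (ropts b)" "Rs b = Ls y" using Rs_ex[OF ne(4)] by blast
      then have "gplus a y \<in> set (ropts (gplus a b))" by simp
      then have "Rs (gplus a b) \<le> Ls (gplus a y)" by (rule Rs_le)
      also have "\<dots> \<le> Ls a + Ls y" using IH[OF sz(4)[OF y(1)] less.prems(1) g(4)[OF y(1)]] by auto
      finally show ?thesis using y by simp
    qed
    have 4: "Rs a + Rs b \<le> Rs (gplus a b)"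
      unfolding Rs_ge_iff[OF ne2(2)]
    proof
      fix z assume "z \<in> set (ropts (gplus a b))"
      then consider x where "x \<in> set (ropts a)" "z = gplus x b" | y where "y \<in> set (ropts b)" "z = gplus a y"
        by auto
      then show "Rs a + Rs b \<le> Ls z"
      proof cases
        case (1 x)
        then have "Ls x + Rs b \<le> Ls z" using IH[OF sz(2) g(2) less.prems(2)] by auto
        then show ?thesis using Rs_le[OF 1(1)] by linarith
      next
        case (2 y)
        then have "Rs a + Ls y \<le> Ls z" using IH[OF sz(4) less.prems(1) g(4)] by auto
        then show ?thesis using Rs_le[OF 2(1)] by linarith
      qed
    qed
    have 5: "Ls a + Rs b \<le> Ls (gplus a b)"
    proof -
      obtain x where x: "x \<in> set (lopts a)" "Ls a = Rs x" using Ls_ex[OF ne(1)] by blast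
      then have "gplus x b \<in> set (lopts (gplus a b))" by simp
      have "Rs x + Rs b \<le> Rs (gplus x b)" using IH[OF sz(1)[OF x(1)] g(1)[OF x(1)] less.prems(2)] by auto
      also have "\<dots> \<le> Ls (gplus a b)" using \<open>gplus x b \<in> _\<close> by (rule Ls_ge)
      finally show ?thesis using x by simp
    qed
    have 6: "Rs a + Ls b \<le> Ls (gplus a b)"
    proof -
      obtain y where y: "y \<in> set (lopts b)" "Ls b = Rs y" using Ls_ex[OF ne(3)] by blast
      then have "gplus a y \<in> set (lopts (gplus a b))" by simp
      have "Rs a + Rs y \<le> Rs (gplus a y)" using IH[OF sz(3)[OF y(1)] less.prems(1) g(3)[OF y(1)]] by auto
      also have "\<dots> \<le> Ls (gplus a b)" using \<open>gplus a y \<in> _\<close> by (rule Ls_ge)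
      finally show ?thesis using y by simp
    qed
    show ?thesis using 1 2 3 4 5 6 by blast
  qed
qed

lemma good_gplus: "good a \<Longrightarrow> good b \<Longrightarrow> good (gplus a b)"
proof (induction "size a + size b" arbitrary: a b rule: less_induct)
  case less
  have ok: "okp (gplus a b)"
  proof -
    have "lopts (gplus a b) = [] \<longleftrightarrow> ropts (gplus a b) = []"
      using good_dic[OF less.prems(1)] good_dic[OF less.prems(2)] by simp
    moreover have "Rs (gplus a b) \<le> Ls (gplus a b)"
      using sum_ineqs[OF less.prems] by linarith
    moreover have "lterm (gplus a b) = rterm (gplus a b)" if "lopts (gplus a b) = []"
      using that good_term[OF less.prems(1)] good_term[OF less.prems(2)] by (simp add: is_num_def)
    ultimately show ?thesis by (simp add: okp_def)
  qed
  have "good z" if "z \<in> set (lopts (gplus a b))" for z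
  proof -
    from that consider x where "x \<in> set (lopts a)" "z = gplus x b" | y where "y \<in> set (lopts b)" "z = gplus a y"
      by auto
    then show ?thesis
    proof cases
      case (1 x) then show ?thesis using less size_lopts good_lopt by fastforce
    next
      case (2 y) then show ?thesis using less size_lopts good_lopt by fastforce
    qed
  qed
  moreover have "good z" if "z \<in> set (ropts (gplus a b))" for z
  proof -
    from that consider x where "x \<in> set (ropts a)" "z = gplus x b" | y where "y \<in> set (ropts b)" "z = gplus a y"
      by auto
    then show ?thesis
    proof cases
      case (1 x) then show ?thesis using less size_ropts good_ropt by fastforce
    next
      case (2 y) then show ?thesis using less size_ropts good_ropt by fastforce
    qed
  qed
  ultimately show ?case using ok good_iff by blast
qed

lemma good_gsum: "\<forall>g\<in>set xs. good g \<Longrightarrow> good (gsum xs)"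
  by (induction xs) (simp_all add: gsum_Cons good_gplus num_def[symmetric])

lemma gsum_sub: "\<forall>g\<in>set xs. good g \<Longrightarrow> Ls (gsum xs) \<le> sum_list (map Ls xs)"
proof (induction xs)
  case Nil then show ?case by (simp add: num_def[symmetric])
next
  case (Cons a r)
  then show ?case using sum_ineqs[OF _ good_gsum, of a r] by (simp add: gsum_Cons)
qed

lemma gsum_super: "\<forall>g\<in>set xs. good g \<Longrightarrow> sum_list (map Rs xs) \<le> Rs (gsum xs)"
proof (induction xs)
  case Nil then show ?case by (simp add: num_def[symmetric])
next
  case (Cons a r)
  then show ?case using sum_ineqs[OF _ good_gsum, of a r] by (simp add: gsum_Cons)
qed

section \<open>Cooling\<close>

definition t0 :: "sgame \<Rightarrow> real" where
  "t0 G = (LEAST s. 0 \<le> s \<and> Ls (cool_tilde G s) = Rs (cool_tilde G s))"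

definition FF :: "sgame \<Rightarrow> real" where
  "FF G = (if is_num G then lterm G else Ls (cool_tilde G (t0 G)))"

lemma cool_eq: "cool G t = (if is_num G then num (lterm G) else if t \<le> t0 G then cool_tilde G t
     else num (Ls (cool_tilde G (t0 G))))"
  by (cases G) (simp add: cool_tilde_def is_num_def t0_def Let_def)

declare cool.simps[simp del]

lemma temp_eq: "temp G = (if is_num G then 0 else t0 G)"
  by (simp add: temp_def t0_def)

lemma tilde_sel[simp]:
  "lopts (cool_tilde G s) = map (\<lambda>g. shift (-s) (cool g s)) (lopts G)"
  "ropts (cool_tilde G s) = map (\<lambda>g. shift s (cool g s)) (ropts G)"
  "lterm (cool_tilde G s) = lterm G" "rterm (cool_tilde G s) = rterm G"
  by (simp_all add: cool_tilde_def)

lemma Max_mono_img: "finite A \<Longrightarrow> A \<noteq> {} \<Longrightarrow> (\<And>x. x \<in> A \<Longrightarrow> f x \<le> h x) \<Longrightarrow> Max (f ` A) \<le> Max ((h::_\<Rightarrow>real) ` A)"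
  by (subst Max_le_iff) (auto intro: order.trans[OF _ Max_ge])

lemma Min_mono_img: "finite A \<Longrightarrow> A \<noteq> {} \<Longrightarrow> (\<And>x. x \<in> A \<Longrightarrow> f x \<le> h x) \<Longrightarrow> Min (f ` A) \<le> Min ((h::_\<Rightarrow>real) ` A)"
  by (subst Min_ge_iff) (auto intro: order.trans[OF Min_le])

lemma Max_minus: "finite A \<Longrightarrow> A \<noteq> {} \<Longrightarrow> Max ((\<lambda>x. f x - c) ` A) = Max (f ` A) - (c::real)"
  using Max_add_commute[of A f "-c"] by simp

lemma Ls_tilde: "lopts G \<noteq> [] \<Longrightarrow> Ls (cool_tilde G s) = Max ((\<lambda>x. Rs (cool x s)) ` set (lopts G)) - s"
proof -
  assume ne: "lopts G \<noteq> []"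
  have "Rs ` set (lopts (cool_tilde G s)) = (\<lambda>x. Rs (cool x s) - s) ` set (lopts G)"
    by (auto simp: image_image)
  then show ?thesis using ne by (simp add: Ls_eq[of "cool_tilde G s"] Max_minus)
qed

lemma Rs_tilde: "ropts G \<noteq> [] \<Longrightarrow> Rs (cool_tilde G s) = Min ((\<lambda>x. Ls (cool x s)) ` set (ropts G)) + s"
proof -
  assume ne: "ropts G \<noteq> []"
  have "Ls ` set (ropts (cool_tilde G s)) = (\<lambda>x. Ls (cool x s) + s) ` set (ropts G)"
    by (auto simp: image_image)
  then show ?thesis using ne by (simp add: Rs_eq[of "cool_tilde G s"] Min_add_commute)
qed

lemma lip_cont:
  fixes f :: "real \<Rightarrow> real"
  assumes "\<And>s s'. s \<le> s' \<Longrightarrow> \<bar>f s' - f s\<bar> \<le> C * (s' - s)" "0 \<le> C"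
  shows "continuous_on UNIV f"
proof (rule lipschitz_on_continuous_on)
  show "C-lipschitz_on UNIV f"
    unfolding lipschitz_on_def dist_real_def
  proof (intro conjI ballI assms(2))
    fix x y :: real
    show "\<bar>f x - f y\<bar> \<le> C * \<bar>x - y\<bar>"
    proof (cases "x \<le> y")
      case True then show ?thesis using assms(1)[of x y] by (simp add: abs_minus_commute)
    next
      case False then show ?thesis using assms(1)[of y x] by simp
    qed
  qed
qed

definition cool_mono :: "sgame \<Rightarrow> bool" where
  "cool_mono G \<longleftrightarrow> (\<forall>s s'. s \<le> s' \<longrightarrow> Ls (cool G s') \<le> Ls (cool G s) \<and> Ls (cool G s) + s \<le> Ls (cool G s') + s'
      \<and> Rs (cool G s) \<le> Rs (cool G s') \<and> Rs (cool G s') - s' \<le> Rs (cool G s) - s)"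

lemma min_shift_mono: "s \<le> s' \<Longrightarrow> s - min s (t::real) \<le> s' - min s' t"
  by (simp add: min_def)

lemma cool_num: "is_num G \<Longrightarrow> cool G s = G"
  using is_num_eq[of G] by (simp add: cool_eq)

lemma cool_props:
  "good G \<Longrightarrow> cool_mono G \<and> (\<forall>s\<ge>0. good (cool G s)) \<and> cool G 0 = G \<and>
    (\<not> is_num G \<longrightarrow> 0 \<le> t0 G \<and> Ls (cool_tilde G (t0 G)) = Rs (cool_tilde G (t0 G)) \<and>
       (\<forall>s. s \<le> t0 G \<longrightarrow> Rs (cool_tilde G s) \<le> Ls (cool_tilde G s)))"
proof (induction G)
  case (SG L l R r)
  define H where "H = SG L l R r"
  have gH: "good H" using SG.prems H_def by simp
  have sel: "lopts H = L" "ropts H = R" "lterm H = l" "rterm H = r" by (simp_all add: H_def)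
  have IH: "\<And>x. x \<in> set L \<Longrightarrow> cool_mono x \<and> (\<forall>s\<ge>0. good (cool x s)) \<and> cool x 0 = x"
    "\<And>x. x \<in> set R \<Longrightarrow> cool_mono x \<and> (\<forall>s\<ge>0. good (cool x s)) \<and> cool x 0 = x"
    using SG.IH good_lopt[OF gH] good_ropt[OF gH] sel by blast+
  have main: "cool_mono H \<and> (\<forall>s\<ge>0. good (cool H s)) \<and> cool H 0 = H \<and>
    (\<not> is_num H \<longrightarrow> 0 \<le> t0 H \<and> Ls (cool_tilde H (t0 H)) = Rs (cool_tilde H (t0 H)) \<and>
       (\<forall>s. s \<le> t0 H \<longrightarrow> Rs (cool_tilde H s) \<le> Ls (cool_tilde H s)))"
  proof (cases "is_num H")
    case True
    then show ?thesis using cool_num[OF True] gH by (simp add: cool_mono_def)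
  next
    case False
    have ne: "L \<noteq> []" "R \<noteq> []" using good_term[OF gH] good_term'[OF gH] False sel by auto
    define M where "M s = Max ((\<lambda>x. Rs (cool x s)) ` set L)" for s
    define N where "N s = Min ((\<lambda>x. Ls (cool x s)) ` set R)" for s
    have p: "\<And>s. Ls (cool_tilde H s) = M s - s" using Ls_tilde[of H] ne sel by (simp add: M_def)
    have q: "\<And>s. Rs (cool_tilde H s) = N s + s" using Rs_tilde[of H] ne sel by (simp add: N_def)
    have Mm: "M s \<le> M s' \<and> M s' - s' \<le> M s - s" if "s \<le> s'" for s s'
    proof
      show "M s \<le> M s'" unfolding M_def
        using ne IH(1) that by (intro Max_mono_img) (auto simp: cool_mono_def)
      have "M s' - s' = Max ((\<lambda>x. Rs (cool x s') - s') ` set L)" unfolding M_def using ne by (simp add: Max_minus)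
      also have "\<dots> \<le> Max ((\<lambda>x. Rs (cool x s) - s) ` set L)"
        using ne IH(1) that by (intro Max_mono_img) (auto simp: cool_mono_def)
      also have "\<dots> = M s - s" unfolding M_def using ne by (simp add: Max_minus)
      finally show "M s' - s' \<le> M s - s" .
    qed
    have Nm: "N s' \<le> N s \<and> N s + s \<le> N s' + s'" if "s \<le> s'" for s s'
    proof
      show "N s' \<le> N s" unfolding N_def
        using ne IH(2) that by (intro Min_mono_img) (auto simp: cool_mono_def)
      have "N s + s = Min ((\<lambda>x. Ls (cool x s) + s) ` set R)" unfolding N_def using ne by (simp add: Min_add_commute)
      also have "\<dots> \<le> Min ((\<lambda>x. Ls (cool x s') + s') ` set R)"
        using ne IH(2) that by (intro Min_mono_img) (auto simp: cool_mono_def)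
      also have "\<dots> = N s' + s'" unfolding N_def using ne by (simp add: Min_add_commute)
      finally show "N s + s \<le> N s' + s'" .
    qed
    have M0: "M 0 = Ls H"
    proof -
      have "(\<lambda>x. Rs (cool x 0)) ` set L = Rs ` set L" using IH(1) by (auto simp: image_def)
      then show ?thesis using ne sel by (simp add: M_def Ls_eq)
    qed
    have N0: "N 0 = Rs H"
    proof -
      have "(\<lambda>x. Ls (cool x 0)) ` set R = Ls ` set R" using IH(2) by (auto simp: image_def)
      then show ?thesis using ne sel by (simp add: N_def Rs_eq)
    qed
    define A where "A = Max (Ls ` set L)"
    define B where "B = Min (Rs ` set R)"
    have MA: "M s \<le> A" if "0 \<le> s" for s
      unfolding M_def A_def using ne
    proof (intro Max_mono_img[where h = Ls, unfolded image_image[symmetric]])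
      fix x assume x: "x \<in> set L"
      have "Rs (cool x s) \<le> Ls (cool x s)" using IH(1)[OF x] that good_nz by blast
      also have "\<dots> \<le> Ls (cool x 0)" using conjunct1[OF IH(1)[OF x]] that unfolding cool_mono_def by blast
      finally show "Rs (cool x s) \<le> Ls x" using IH(1)[OF x] by simp
    qed auto
    have NB: "B \<le> N s" if "0 \<le> s" for s
      unfolding N_def B_def using ne
    proof (intro Min_mono_img[where f = Rs, unfolded image_image[symmetric]])
      fix x assume x: "x \<in> set R"
      have "Rs (cool x 0) \<le> Rs (cool x s)" using conjunct1[OF IH(2)[OF x]] that unfolding cool_mono_def by blast
      also have "\<dots> \<le> Ls (cool x s)" using IH(2)[OF x] that good_nz by blast
      finally show "Rs x \<le> Ls (cool x s)" using IH(2)[OF x] by simp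
    qed auto
    define pp where "pp s = M s - s" for s
    define qq where "qq s = N s + s" for s
    have cpp: "continuous_on UNIV pp"
    proof (rule lip_cont[where C=1])
      fix s s' :: real assume ss: "s \<le> s'"
      show "\<bar>pp s' - pp s\<bar> \<le> 1 * (s' - s)" using Mm[OF ss] unfolding pp_def abs_le_iff by auto
    qed simp
    have cqq: "continuous_on UNIV qq"
    proof (rule lip_cont[where C=1])
      fix s s' :: real assume ss: "s \<le> s'"
      show "\<bar>qq s' - qq s\<bar> \<le> 1 * (s' - s)" using Nm[OF ss] unfolding qq_def abs_le_iff by auto
    qed simp
    have cg: "continuous_on UNIV (\<lambda>s. pp s - qq s)" using cpp cqq by (intro continuous_on_diff)
    define S where "S = max 0 ((A - B) / 2)"
    have g0: "0 \<le> pp 0 - qq 0" using M0 N0 good_nz[OF gH] by (simp add: pp_def qq_def)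
    have S0: "0 \<le> S" "(A - B) / 2 \<le> S" by (simp_all add: S_def)
    have gS: "pp S - qq S \<le> 0" using MA[OF S0(1)] NB[OF S0(1)] S0 by (simp add: pp_def qq_def)
    obtain z where z: "0 \<le> z" "z \<le> S" "pp z - qq z = 0"
      using IVT2'[of "\<lambda>s. pp s - qq s" S 0 0] g0 gS continuous_on_subset[OF cg] by (auto simp: S_def)
    define Z where "Z = {0..} \<inter> {s. pp s = qq s}"
    have Zne: "Z \<noteq> {}" using z by (auto simp: Z_def)
    have Zcl: "closed Z" unfolding Z_def by (intro closed_Int closed_atLeast closed_Collect_eq cpp cqq)
    have Zbd: "bdd_below Z" unfolding Z_def by (auto intro: bdd_belowI[of _ 0])
    have IZ: "Inf Z \<in> Z" by (rule closed_contains_Inf[OF Zne Zbd Zcl])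
    have t0eq: "t0 H = Inf Z" unfolding t0_def
    proof (rule Least_equality)
      show "0 \<le> Inf Z \<and> Ls (cool_tilde H (Inf Z)) = Rs (cool_tilde H (Inf Z))"
        using IZ by (simp add: Z_def p q pp_def qq_def)
      fix y assume "0 \<le> y \<and> Ls (cool_tilde H y) = Rs (cool_tilde H y)"
      then have "y \<in> Z" by (simp add: Z_def p q pp_def qq_def)
      then show "Inf Z \<le> y" using Zbd by (rule cInf_lower)
    qed
    define T where "T = t0 H"
    have T: "0 \<le> T" "pp T = qq T" using IZ t0eq by (simp_all add: T_def Z_def)
    have nzT: "qq s \<le> pp s" if "s \<le> T" for s
      using Mm[OF that] Nm[OF that] T by (simp add: pp_def qq_def)
    have ceq: "cool H s = (if s \<le> T then cool_tilde H s else num (pp T))" for s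
      using False by (simp add: cool_eq[of H] T_def p pp_def)
    have LRc: "Ls (cool H s) = pp (min s T) \<and> Rs (cool H s) = qq (min s T)" for s
      using T by (simp add: ceq p q pp_def qq_def min_def)
    have cm: "cool_mono H" unfolding cool_mono_def
    proof (intro allI impI)
      fix s s' :: real assume ss: "s \<le> s'"
      have mm: "min s T \<le> min s' T" using ss by (simp add: min_def)
      have d: "s - min s T \<le> s' - min s' T" by (rule min_shift_mono[OF ss])
      show "Ls (cool H s') \<le> Ls (cool H s) \<and> Ls (cool H s) + s \<le> Ls (cool H s') + s' \<and>
         Rs (cool H s) \<le> Rs (cool H s') \<and> Rs (cool H s') - s' \<le> Rs (cool H s) - s"
        using LRc[of s] LRc[of s'] Mm[OF mm] Nm[OF mm] d by (simp add: pp_def qq_def)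
    qed
    have gc: "good (cool H s)" if "0 \<le> s" for s
    proof (cases "s \<le> T")
      case True
      have "okp (cool_tilde H s)"
        using ne nzT[OF True] sel by (simp add: okp_def p q pp_def qq_def)
      moreover have "\<forall>x\<in>set (lopts (cool_tilde H s)). good x"
        using IH(1) that sel by (auto intro: good_shift)
      moreover have "\<forall>x\<in>set (ropts (cool_tilde H s)). good x"
        using IH(2) that sel by (auto intro: good_shift)
      ultimately show ?thesis using True ceq good_iff by metis
    next
      case False then show ?thesis using ceq by simp
    qed
    have c0: "cool H 0 = H"
    proof -
      have "map (\<lambda>g. shift (- 0) (cool g 0)) L = L" by (rule map_idI) (simp add: IH(1))
      moreover have "map (\<lambda>g. shift 0 (cool g 0)) R = R" by (rule map_idI) (simp add: IH(2))
      ultimately have "cool_tilde H 0 = H" by (simp add: cool_tilde_def H_def)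
      then show ?thesis using ceq T by simp
    qed
    show ?thesis using cm gc c0 T nzT False
      by (simp add: T_def p q pp_def qq_def)
  qed
  then show ?case unfolding H_def .
qed

lemma cool_good: "good G \<Longrightarrow> 0 \<le> s \<Longrightarrow> good (cool G s)"
  using cool_props by blast

lemma cool_mono': "good G \<Longrightarrow> cool_mono G"
  using cool_props by blast

lemma t0_props: "good G \<Longrightarrow> \<not> is_num G \<Longrightarrow> 0 \<le> t0 G \<and> Ls (cool_tilde G (t0 G)) = Rs (cool_tilde G (t0 G))"
  using cool_props by blast

lemma cool_frozen: "(\<not> is_num G \<longrightarrow> t0 G < t) \<Longrightarrow> cool G t = num (FF G)"
  using is_num_eq[of G] by (auto simp: cool_eq FF_def)

lemma cool_FF: "good G \<Longrightarrow> (\<not> is_num G \<longrightarrow> t0 G \<le> t) \<Longrightarrow> Ls (cool G t) = FF G \<and> Rs (cool G t) = FF G"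
proof -
  assume g: "good G" and h: "\<not> is_num G \<longrightarrow> t0 G \<le> t"
  show ?thesis
  proof (cases "\<not> is_num G \<longrightarrow> t0 G < t")
    case True then show ?thesis using cool_frozen by simp
  next
    case False
    then have "t = t0 G" "\<not> is_num G" using h by auto
    then show ?thesis using t0_props[OF g] by (simp add: cool_eq FF_def)
  qed
qed

lemma lopts_cool: "lopts (cool G t) \<noteq> [] \<Longrightarrow> \<not> is_num G \<and> t \<le> t0 G \<and> cool G t = cool_tilde G t"
  by (auto simp: cool_eq split: if_splits)

lemma ropts_cool: "ropts (cool G t) \<noteq> [] \<Longrightarrow> \<not> is_num G \<and> t \<le> t0 G \<and> cool G t = cool_tilde G t"
  by (auto simp: cool_eq split: if_splits)

lemma frozenL: "good G \<Longrightarrow> \<not> is_num G \<Longrightarrow> x \<in> set (lopts G) \<Longrightarrow> t0 G \<le> t \<Longrightarrow> Rs (cool x t) - t \<le> FF G"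
proof -
  assume g: "good G" "\<not> is_num G" "x \<in> set (lopts G)" "t0 G \<le> t"
  have "Rs (cool x t) - t \<le> Rs (cool x (t0 G)) - t0 G"
    using cool_mono'[OF good_lopt[OF g(1,3)]] g(4) unfolding cool_mono_def by blast
  also have "\<dots> = Rs (shift (- t0 G) (cool x (t0 G)))" by simp
  also have "\<dots> \<le> Ls (cool_tilde G (t0 G))" using g(3) by (intro Ls_ge) simp
  finally show ?thesis using g(2) by (simp add: FF_def)
qed

lemma frozenR: "good G \<Longrightarrow> \<not> is_num G \<Longrightarrow> x \<in> set (ropts G) \<Longrightarrow> t0 G \<le> t \<Longrightarrow> FF G \<le> Ls (cool x t) + t"
proof -
  assume g: "good G" "\<not> is_num G" "x \<in> set (ropts G)" "t0 G \<le> t"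
  have "FF G = Rs (cool_tilde G (t0 G))" using g(2) t0_props[OF g(1,2)] by (simp add: FF_def)
  also have "\<dots> \<le> Ls (shift (t0 G) (cool x (t0 G)))" using g(3) by (intro Rs_le) simp
  also have "\<dots> = Ls (cool x (t0 G)) + t0 G" by simp
  also have "\<dots> \<le> Ls (cool x t) + t"
    using cool_mono'[OF good_ropt[OF g(1,3)]] g(4) unfolding cool_mono_def by blast
  finally show ?thesis .
qed

definition cmap :: "real \<Rightarrow> sgame list \<Rightarrow> sgame list" where "cmap t xs = map (\<lambda>g. cool g t) xs"

lemma cmap_simps[simp]: "length (cmap t xs) = length xs" "j < length xs \<Longrightarrow> cmap t xs ! j = cool (xs!j) t"
  "cmap t (xs[j:=x]) = (cmap t xs)[j := cool x t]"
  by (simp_all add: cmap_def map_update)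

lemma cmap_good: "\<forall>g\<in>set xs. good g \<Longrightarrow> 0 \<le> t \<Longrightarrow> \<forall>g\<in>set (cmap t xs). good g"
  by (auto simp: cmap_def intro: cool_good)

lemma cmap_num: "\<forall>g\<in>set xs. is_num g \<Longrightarrow> cmap t xs = xs"
  by (auto simp: cmap_def cool_num intro: map_idI)

lemma rem_good: "\<forall>g\<in>set xs. good g \<Longrightarrow> \<forall>g\<in>set (rem j xs). good g"
proof -
  have "set (rem j xs) \<subseteq> set xs" by (auto simp: rem_def dest: in_set_takeD in_set_dropD)
  then show "\<forall>g\<in>set xs. good g \<Longrightarrow> \<forall>g\<in>set (rem j xs). good g" by blast
qed

lemma gsum_terminal: "\<forall>g\<in>set xs. good g \<Longrightarrow> lopts (gsum xs) = [] \<Longrightarrow> \<forall>g\<in>set xs. is_num g"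
  by (auto simp: lopts_gsum_Nil intro: good_term)

lemma gsum_terminal': "\<forall>g\<in>set xs. good g \<Longrightarrow> ropts (gsum xs) = [] \<Longrightarrow> \<forall>g\<in>set xs. is_num g"
  by (auto simp: ropts_gsum_Nil intro: good_term')

lemma cool_hot: "good g \<Longrightarrow> \<not> is_num g \<Longrightarrow> t \<le> t0 g \<Longrightarrow>
   cool g t = cool_tilde g t \<and> lopts (cool g t) \<noteq> [] \<and> ropts (cool g t) \<noteq> []"
  using good_term[of g] good_term'[of g] by (auto simp: cool_eq)

lemma cmap_lopts_Nil: "lopts (gsum (cmap t gs)) = [] \<longleftrightarrow> (\<forall>g\<in>set gs. lopts (cool g t) = [])"
  by (simp add: lopts_gsum_Nil cmap_def)

lemma cmap_ropts_Nil: "ropts (gsum (cmap t gs)) = [] \<longleftrightarrow> (\<forall>g\<in>set gs. ropts (cool g t) = [])"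
  by (simp add: ropts_gsum_Nil cmap_def)

lemma is_num_lopts: "is_num g \<Longrightarrow> lopts g = []" and is_num_ropts: "is_num g \<Longrightarrow> ropts g = []"
  by (simp_all add: is_num_def)

lemma good_update: "\<forall>g\<in>set gs. good g \<Longrightarrow> good x \<Longrightarrow> \<forall>g\<in>set (gs[j:=x]). good g"
  using set_update_subset_insert[of gs j x] by auto

lemma key:
  assumes "\<forall>g\<in>set gs. good g" "0 \<le> t"
  shows "Ls (gsum (cmap t gs)) \<le> Ls (gsum gs) \<and> Ls (gsum gs) \<le> Ls (gsum (cmap t gs)) + t \<and>
         Rs (gsum (cmap t gs)) - t \<le> Rs (gsum gs) \<and> Rs (gsum gs) \<le> Rs (gsum (cmap t gs))"
  using assms
proof (induction "msz gs" arbitrary: gs t rule: less_induct)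
  case less
  note gd = less.prems(1) and t = less.prems(2)
  define X where "X = gsum gs"
  have IHL: "Ls (gsum (cmap t' (gs[j:=x]))) \<le> Ls (gsum (gs[j:=x])) \<and> Ls (gsum (gs[j:=x])) \<le> Ls (gsum (cmap t' (gs[j:=x]))) + t' \<and>
         Rs (gsum (cmap t' (gs[j:=x]))) - t' \<le> Rs (gsum (gs[j:=x])) \<and> Rs (gsum (gs[j:=x])) \<le> Rs (gsum (cmap t' (gs[j:=x])))"
    if "j < length gs" "x \<in> set (lopts (gs!j))" "0 \<le> t'" for j x t'
  proof (rule less.hyps[OF msz_lopts[OF that(1,2)] _ that(3)])
    show "\<forall>g\<in>set (gs[j:=x]). good g" using good_update[OF gd good_lopt[OF _ that(2)]] gd that(1) by simp
  qed
  have IHR: "Ls (gsum (cmap t' (gs[j:=x]))) \<le> Ls (gsum (gs[j:=x])) \<and> Ls (gsum (gs[j:=x])) \<le> Ls (gsum (cmap t' (gs[j:=x]))) + t' \<and>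
         Rs (gsum (cmap t' (gs[j:=x]))) - t' \<le> Rs (gsum (gs[j:=x])) \<and> Rs (gsum (gs[j:=x])) \<le> Rs (gsum (cmap t' (gs[j:=x])))"
    if "j < length gs" "x \<in> set (ropts (gs!j))" "0 \<le> t'" for j x t'
  proof (rule less.hyps[OF msz_ropts[OF that(1,2)] _ that(3)])
    show "\<forall>g\<in>set (gs[j:=x]). good g" using good_update[OF gd good_ropt[OF _ that(2)]] gd that(1) by simp
  qed
  have subL: "Ls (gsum (cmap t' gs)) \<le> Ls X" if t': "0 \<le> t'" "lopts (gsum (cmap t' gs)) \<noteq> []" for t'
  proof -
    obtain z where z: "z \<in> set (lopts (gsum (cmap t' gs)))" "Ls (gsum (cmap t' gs)) = Rs z"
      using Ls_ex[OF t'(2)] by blast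
    then obtain j y where j: "j < length gs" "y \<in> set (lopts (cool (gs!j) t'))" "z = gsum ((cmap t' gs)[j:=y])"
      unfolding lopts_gsum by auto
    have "lopts (cool (gs!j) t') \<noteq> []" using j(2) by auto
    then have c: "cool (gs!j) t' = cool_tilde (gs!j) t'" using lopts_cool[of "gs!j" t'] by blast
    then obtain x where x: "x \<in> set (lopts (gs!j))" "y = shift (-t') (cool x t')" using j(2) by auto
    have "Rs z = Rs (gsum ((cmap t' gs)[j:=cool x t'])) - t'"
      using gsum_shift_upd[of j "cmap t' gs" "-t'" "cool x t'"] j x z by simp
    also have "\<dots> = Rs (gsum (cmap t' (gs[j:=x]))) - t'" by simp
    also have "\<dots> \<le> Rs (gsum (gs[j:=x]))" using IHL[OF j(1) x(1) t'(1)] by linarith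
    also have "\<dots> \<le> Ls X" unfolding X_def
    proof (rule Ls_ge)
      show "gsum (gs[j:=x]) \<in> set (lopts (gsum gs))" unfolding lopts_gsum using j(1) x(1) by blast
    qed
    finally show ?thesis using z by simp
  qed
  have subR: "Rs X \<le> Rs (gsum (cmap t' gs))" if t': "0 \<le> t'" "ropts (gsum (cmap t' gs)) \<noteq> []" for t'
  proof -
    obtain z where z: "z \<in> set (ropts (gsum (cmap t' gs)))" "Rs (gsum (cmap t' gs)) = Ls z"
      using Rs_ex[OF t'(2)] by blast
    then obtain j y where j: "j < length gs" "y \<in> set (ropts (cool (gs!j) t'))" "z = gsum ((cmap t' gs)[j:=y])"
      unfolding ropts_gsum by auto
    have "ropts (cool (gs!j) t') \<noteq> []" using j(2) by auto
    then have c: "cool (gs!j) t' = cool_tilde (gs!j) t'" using ropts_cool[of "gs!j" t'] by blast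
    then obtain x where x: "x \<in> set (ropts (gs!j))" "y = shift t' (cool x t')" using j(2) by auto
    have "Rs X \<le> Ls (gsum (gs[j:=x]))" unfolding X_def
    proof (rule Rs_le)
      show "gsum (gs[j:=x]) \<in> set (ropts (gsum gs))" unfolding ropts_gsum using j(1) x(1) by blast
    qed
    also have "\<dots> \<le> Ls (gsum (cmap t' (gs[j:=x]))) + t'" using IHR[OF j(1) x(1) t'(1)] by linarith
    also have "\<dots> = Ls (gsum ((cmap t' gs)[j:=cool x t'])) + t'" by simp
    also have "\<dots> = Ls z"
      using gsum_shift_upd[of j "cmap t' gs" "t'" "cool x t'"] j x z by simp
    finally show ?thesis using z by simp
  qed
  have frz: "Ls (gsum (cmap t gs)) \<le> Ls X \<and> Rs X \<le> Rs (gsum (cmap t gs))"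
    if fr: "\<forall>g\<in>set gs. \<not> is_num g \<longrightarrow> t0 g < t" and nn: "\<not> (\<forall>g\<in>set gs. is_num g)"
  proof -
    define NN where "NN = {g \<in> set gs. \<not> is_num g}"
    have NNf: "finite NN" "NN \<noteq> {}" using nn by (auto simp: NN_def)
    define T where "T = Max (t0 ` NN)"
    have "T \<in> t0 ` NN" unfolding T_def using NNf by (intro Max_in) auto
    then obtain g1 where g1: "g1 \<in> NN" "t0 g1 = T" by (metis imageE)
    have Tge: "t0 g \<le> T" if "g \<in> set gs" "\<not> is_num g" for g
      unfolding T_def using NNf that by (intro Max_ge) (auto simp: NN_def)
    have g1g: "good g1" "\<not> is_num g1" "g1 \<in> set gs" using g1 gd by (auto simp: NN_def)
    have T0: "0 \<le> T" using t0_props[OF g1g(1,2)] g1 by simp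
    have Tt: "T < t" using fr g1g g1 by auto
    have "T \<le> t0 g1" using g1 by simp
    then have hot: "lopts (cool g1 T) \<noteq> [] \<and> ropts (cool g1 T) \<noteq> []" using cool_hot[OF g1g(1,2)] by blast
    have hl: "lopts (gsum (cmap T gs)) \<noteq> []" "ropts (gsum (cmap T gs)) \<noteq> []"
      using hot g1g(3) by (auto simp: cmap_lopts_Nil cmap_ropts_Nil)
    have gT: "good (gsum (cmap T gs))" "\<forall>g\<in>set (cmap T gs). good g"
      using good_gsum cmap_good[OF gd T0] by blast+
    have FT: "map Rs (cmap T gs) = map FF gs" "map Ls (cmap T gs) = map FF gs"
      using cool_FF gd Tge by (auto simp: cmap_def)
    have Ft: "cmap t gs = map (\<lambda>g. num (FF g)) gs"
      using cool_frozen fr by (auto simp: cmap_def)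
    have Ct: "Ls (gsum (cmap t gs)) = sum_list (map FF gs)" "Rs (gsum (cmap t gs)) = sum_list (map FF gs)"
      unfolding Ft by (simp_all add: Ls_eq Rs_eq lopts_gsum_Nil ropts_gsum_Nil lterm_gsum rterm_gsum comp_def)
    have "Ls (gsum (cmap t gs)) \<le> Rs (gsum (cmap T gs))"
      using gsum_super[OF gT(2)] Ct FT by simp
    also have "\<dots> \<le> Ls (gsum (cmap T gs))" using good_nz[OF gT(1)] .
    also have "\<dots> \<le> Ls X" using subL[OF T0 hl(1)] .
    finally have 1: "Ls (gsum (cmap t gs)) \<le> Ls X" .
    have "Rs X \<le> Rs (gsum (cmap T gs))" using subR[OF T0 hl(2)] .
    also have "\<dots> \<le> Ls (gsum (cmap T gs))" using good_nz[OF gT(1)] .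
    also have "\<dots> \<le> Rs (gsum (cmap t gs))"
      using gsum_sub[OF gT(2)] Ct FT by simp
    finally show ?thesis using 1 by simp
  qed
  have allnum: "cmap t gs = gs" if "\<forall>g\<in>set gs. is_num g" using cmap_num[OF that] .
  have fr_of: "\<forall>g\<in>set gs. \<not> is_num g \<longrightarrow> t0 g < t"
    if "lopts (gsum (cmap t gs)) = [] \<or> ropts (gsum (cmap t gs)) = []"
  proof (intro ballI impI)
    fix g assume g: "g \<in> set gs" "\<not> is_num g"
    show "t0 g < t"
    proof (rule ccontr)
      assume "\<not> t0 g < t"
      then have "lopts (cool g t) \<noteq> [] \<and> ropts (cool g t) \<noteq> []" using cool_hot[of g t] gd g by auto
      then show False using that g by (auto simp: cmap_lopts_Nil cmap_ropts_Nil)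
    qed
  qed
  have 1: "Ls (gsum (cmap t gs)) \<le> Ls X"
  proof (cases "lopts (gsum (cmap t gs)) = []")
    case False then show ?thesis using subL[OF t] by blast
  next
    case True
    show ?thesis
    proof (cases "\<forall>g\<in>set gs. is_num g")
      case True then show ?thesis using allnum X_def by simp
    next
      case False then show ?thesis using frz fr_of True by blast
    qed
  qed
  have 4: "Rs X \<le> Rs (gsum (cmap t gs))"
  proof (cases "ropts (gsum (cmap t gs)) = []")
    case False then show ?thesis using subR[OF t] by blast
  next
    case True
    show ?thesis
    proof (cases "\<forall>g\<in>set gs. is_num g")
      case True then show ?thesis using allnum X_def by simp
    next
      case False then show ?thesis using frz fr_of True by blast
    qed
  qed
  have cg: "\<forall>g\<in>set (cmap t gs). good g" using cmap_good[OF gd t] .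
  have 2: "Ls X \<le> Ls (gsum (cmap t gs)) + t"
  proof (cases "lopts X = []")
    case True
    then have "cmap t gs = gs" using allnum gsum_terminal[OF gd] X_def by simp
    then show ?thesis using t X_def by simp
  next
    case False
    obtain z where z: "z \<in> set (lopts X)" "Ls X = Rs z" using Ls_ex[OF False] by blast
    then obtain j x where j: "j < length gs" "x \<in> set (lopts (gs!j))" "z = gsum (gs[j:=x])"
      unfolding X_def lopts_gsum by blast
    define gj where "gj = gs!j"
    have gj: "good gj" "\<not> is_num gj" using gd j(1,2) is_num_lopts by (auto simp: gj_def)
    have r1: "Rs z \<le> Rs (gsum ((cmap t gs)[j:=cool x t]))" using IHL[OF j(1,2) t] j(3) by simp
    show ?thesis
    proof (cases "t \<le> t0 gj")
      case True
      then have c: "cool gj t = cool_tilde gj t" using cool_hot[OF gj] by simp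
      have mem: "gsum ((cmap t gs)[j:=shift (-t) (cool x t)]) \<in> set (lopts (gsum (cmap t gs)))"
        unfolding lopts_gsum using j(1,2) c by (auto simp: gj_def intro!: exI[of _ j])
      have "Rs (gsum ((cmap t gs)[j:=cool x t])) - t = Rs (gsum ((cmap t gs)[j:=shift (-t) (cool x t)]))"
        using gsum_shift_upd[of j "cmap t gs" "-t" "cool x t"] j(1) by simp
      also have "\<dots> \<le> Ls (gsum (cmap t gs))" using mem by (rule Ls_ge)
      finally show ?thesis using r1 z by linarith
    next
      case False
      then have fz: "cmap t gs ! j = num (FF gj)" using cool_frozen gj j(1) by (simp add: gj_def)
      define rr where "rr = rem j (cmap t gs)"
      have grr: "good (gsum rr)" unfolding rr_def using good_gsum rem_good[OF cg] by blast
      have gx: "good (cool x t)" using cool_good[OF good_lopt[OF gj(1) j(2)[folded gj_def]] t] .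
      have "Rs (gsum ((cmap t gs)[j:=cool x t])) = Rs (gplus (cool x t) (gsum rr))"
        using gsum_split_upd[of j "cmap t gs"] j(1) by (simp add: rr_def)
      also have "\<dots> \<le> Rs (cool x t) + Ls (gsum rr)" using sum_ineqs[OF gx grr] by blast
      also have "\<dots> \<le> FF gj + t + Ls (gsum rr)"
        using frozenL[OF gj j(2)[folded gj_def], of t] False by simp
      also have "\<dots> = Ls (gsum (cmap t gs)) + t"
        using gsum_split[of j "cmap t gs"] j(1) fz by (simp add: rr_def gplus_num1)
      finally show ?thesis using r1 z by linarith
    qed
  qed
  have 3: "Rs (gsum (cmap t gs)) - t \<le> Rs X"
  proof (cases "ropts X = []")
    case True
    then have "cmap t gs = gs" using allnum gsum_terminal'[OF gd] X_def by simp
    then show ?thesis using t X_def by simp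
  next
    case False
    obtain z where z: "z \<in> set (ropts X)" "Rs X = Ls z" using Rs_ex[OF False] by blast
    then obtain j x where j: "j < length gs" "x \<in> set (ropts (gs!j))" "z = gsum (gs[j:=x])"
      unfolding X_def ropts_gsum by blast
    define gj where "gj = gs!j"
    have gj: "good gj" "\<not> is_num gj" using gd j(1,2) is_num_ropts by (auto simp: gj_def)
    have r1: "Ls (gsum ((cmap t gs)[j:=cool x t])) \<le> Ls z" using IHR[OF j(1,2) t] j(3) by simp
    show ?thesis
    proof (cases "t \<le> t0 gj")
      case True
      then have c: "cool gj t = cool_tilde gj t" using cool_hot[OF gj] by simp
      have mem: "gsum ((cmap t gs)[j:=shift t (cool x t)]) \<in> set (ropts (gsum (cmap t gs)))"
        unfolding ropts_gsum using j(1,2) c by (auto simp: gj_def intro!: exI[of _ j])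
      have "Rs (gsum (cmap t gs)) \<le> Ls (gsum ((cmap t gs)[j:=shift t (cool x t)]))" using mem by (rule Rs_le)
      also have "\<dots> = Ls (gsum ((cmap t gs)[j:=cool x t])) + t"
        using gsum_shift_upd[of j "cmap t gs" "t" "cool x t"] j(1) by simp
      finally show ?thesis using r1 z by linarith
    next
      case False
      then have fz: "cmap t gs ! j = num (FF gj)" using cool_frozen gj j(1) by (simp add: gj_def)
      define rr where "rr = rem j (cmap t gs)"
      have grr: "good (gsum rr)" unfolding rr_def using good_gsum rem_good[OF cg] by blast
      have gx: "good (cool x t)" using cool_good[OF good_ropt[OF gj(1) j(2)[folded gj_def]] t] .
      have "Rs (gsum (cmap t gs)) - t = Rs (gsum rr) + FF gj - t"
        using gsum_split[of j "cmap t gs"] j(1) fz by (simp add: rr_def gplus_num1)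
      also have "\<dots> \<le> Ls (cool x t) + Rs (gsum rr)"
        using frozenR[OF gj j(2)[folded gj_def], of t] False by simp
      also have "\<dots> \<le> Ls (gplus (cool x t) (gsum rr))" using sum_ineqs[OF gx grr] by blast
      also have "\<dots> = Ls (gsum ((cmap t gs)[j:=cool x t]))"
        using gsum_split_upd[of j "cmap t gs"] j(1) by (simp add: rr_def)
      finally show ?thesis using r1 z by linarith
    qed
  qed
  show ?case using 1 2 3 4 X_def by blast
qed

section \<open>Mean\<close>

lemma good_of: "dicotic g \<and> nonzugzwang g \<and> terminal_numbers g \<Longrightarrow> good g"
  by (auto simp: good_def okp_def dicotic_def nonzugzwang_def terminal_numbers_def is_num_def)

lemma ncopies_gsum: "ncopies n G = gsum (replicate n G)"
  by (induction n G rule: ncopies.induct) (simp_all add: gsum_Cons gplus_num2)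

definition tau :: "sgame \<Rightarrow> real" where "tau G = (if is_num G then 0 else t0 G)"

lemma tau_nonneg: "good G \<Longrightarrow> 0 \<le> tau G"
  using t0_props by (auto simp: tau_def)

lemma cool_tau: "good G \<Longrightarrow> tau G \<le> t \<Longrightarrow> Ls (cool G t) = FF G \<and> Rs (cool G t) = FF G"
  by (rule cool_FF) (auto simp: tau_def)

lemma sum_bounds:
  assumes gd: "\<forall>g\<in>set gs. good g" and t: "\<forall>g\<in>set gs. tau g \<le> t" "0 \<le> t"
  shows "sum_list (map FF gs) - t \<le> Rs (gsum gs) \<and> Rs (gsum gs) \<le> sum_list (map FF gs) \<and>
         sum_list (map FF gs) \<le> Ls (gsum gs) \<and> Ls (gsum gs) \<le> sum_list (map FF gs) + t"
proof -
  have k: "Ls (gsum (cmap t gs)) \<le> Ls (gsum gs) \<and> Ls (gsum gs) \<le> Ls (gsum (cmap t gs)) + t \<and>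
         Rs (gsum (cmap t gs)) - t \<le> Rs (gsum gs) \<and> Rs (gsum gs) \<le> Rs (gsum (cmap t gs))"
    by (rule key[OF gd t(2)])
  have cg: "\<forall>g\<in>set (cmap t gs). good g" using cmap_good[OF gd t(2)] .
  have gC: "good (gsum (cmap t gs))" using good_gsum[OF cg] .
  have FL: "map Ls (cmap t gs) = map FF gs" "map Rs (cmap t gs) = map FF gs"
    using cool_tau gd t(1) by (auto simp: cmap_def)
  have a: "Ls (gsum (cmap t gs)) \<le> sum_list (map FF gs)" using gsum_sub[OF cg] FL by simp
  have b: "sum_list (map FF gs) \<le> Rs (gsum (cmap t gs))" using gsum_super[OF cg] FL by simp
  have c: "Rs (gsum (cmap t gs)) \<le> Ls (gsum (cmap t gs))" using good_nz[OF gC] .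
  show ?thesis using k a b c by linarith
qed

lemma mean_FF: assumes g: "good G" shows "mean G = FF G"
proof -
  have bnd: "FF G \<le> Ls (ncopies n G) / real n \<and> Ls (ncopies n G) / real n \<le> FF G + tau G / real n"
    if n: "1 \<le> n" for n
  proof -
    have gs: "\<forall>g\<in>set (replicate n G). good g" "\<forall>g\<in>set (replicate n G). tau g \<le> tau G" using g by auto
    note sb = sum_bounds[OF gs tau_nonneg[OF g]]
    have "sum_list (map FF (replicate n G)) = real n * FF G" by (simp add: sum_list_replicate)
    then have "real n * FF G \<le> Ls (ncopies n G) \<and> Ls (ncopies n G) \<le> real n * FF G + tau G"
      using sb by (simp add: ncopies_gsum)
    moreover have "0 < real n" using n by simp
    ultimately show ?thesis by (simp add: field_simps)
  qed
  have "(\<lambda>n. Ls (ncopies n G) / real n) \<longlonglongrightarrow> FF G"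
  proof (rule tendsto_sandwich[where f = "\<lambda>n. FF G" and h = "\<lambda>n. FF G + tau G / real n"])
    show "\<forall>\<^sub>F n in sequentially. FF G \<le> Ls (ncopies n G) / real n"
      using bnd by (auto simp: eventually_sequentially)
    show "\<forall>\<^sub>F n in sequentially. Ls (ncopies n G) / real n \<le> FF G + tau G / real n"
      using bnd by (auto simp: eventually_sequentially)
    show "(\<lambda>n. FF G) \<longlonglongrightarrow> FF G" by simp
    have "(\<lambda>n. FF G + tau G / real n) \<longlonglongrightarrow> FF G + 0"
      by (intro tendsto_add tendsto_const lim_const_over_n)
    then show "(\<lambda>n. FF G + tau G / real n) \<longlonglongrightarrow> FF G" by simp
  qed
  then show ?thesis unfolding mean_def by (rule limI)
qed

theorem mainTheorem6:
  fixes Gs :: "sgame list"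
  assumes "Gs \<noteq> []"
    and "\<forall>g\<in>set Gs. dicotic g \<and> nonzugzwang g \<and> terminal_numbers g"
  shows "(\<Sum>g\<leftarrow>Gs. mean g) - Max (temp ` set Gs) \<le> Rs (gsum Gs)
       \<and> Rs (gsum Gs) \<le> (\<Sum>g\<leftarrow>Gs. mean g)
       \<and> (\<Sum>g\<leftarrow>Gs. mean g) \<le> Ls (gsum Gs)
       \<and> Ls (gsum Gs) \<le> (\<Sum>g\<leftarrow>Gs. mean g) + Max (temp ` set Gs)"
proof -
  have gd: "\<forall>g\<in>set Gs. good g" using assms(2) good_of by blast
  have tt: "temp g = tau g" for g by (simp add: temp_eq tau_def)
  define s where "s = Max (temp ` set Gs)"
  have ts: "\<forall>g\<in>set Gs. tau g \<le> s" unfolding s_def tt[symmetric] by (auto intro: Max_ge)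
  obtain g0 where g0: "g0 \<in> set Gs" using assms(1) by (cases Gs) auto
  have s0: "0 \<le> s" using ts g0 tau_nonneg gd by (meson order.trans)
  have "map mean Gs = map FF Gs" using mean_FF gd by auto
  then have m: "sum_list (map mean Gs) = sum_list (map FF Gs)" by (rule arg_cong)
  have X: "sum_list (map FF Gs) - s \<le> Rs (gsum Gs) \<and> Rs (gsum Gs) \<le> sum_list (map FF Gs) \<and>
         sum_list (map FF Gs) \<le> Ls (gsum Gs) \<and> Ls (gsum Gs) \<le> sum_list (map FF Gs) + s"
    by (rule sum_bounds[OF gd ts s0])
  then show ?thesis unfolding m s_def .
qed

end
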